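(* Assume the setting described in the context and that $u$ satisfies Assumption $( * )$. Let $T\in(t_0,\infty)$ and let $(y,w)$ be a solution of the integrated Maxey–Riley system on $[t_0,T)$ with initial condition $(y_0,w_0)$. Then there exist constants $C_Y,C_W$, depending on $T,y_0,w_0,\kappa,\mu$ and $L_b$, such that $\sup_{t\in[t_0,T)}|y(t)|\le C_Y$ and $\sup_{t\in[t_0,T)}|w(t)|\le C_W$.
   Context: Fix $n\ge 1$, a domain $\mathscr{D}\subseteq\mathbb{R}^n$, an initial time $t_0\ge 0$, a velocity field $u:\mathscr{D}\times[0,\infty)\to\mathbb{R}^n$, real constants $R,\mu,\kappa,\gamma>0$ and a constant vector $g\in\mathbb{R}^n$. Write $\frac{D}{Dt}=\partial_t+(u\cdot\nabla)$ and define $A_u,B_u:\mathscr{D}\times[t_0,\infty)\to\mathbb{R}^n$, $M_u:\mathscr{D}\times[t_0,\infty)\to\mathbb{R}^{n\times n}$ by $A_u=u+\frac{\gamma}{6}\mu^{-1}\Delta u$, $M_u=\nabla u+\frac{\gamma}{6}\mu^{-1}\nabla\Delta u$, $B_u=\left(\frac{3R}{2}-1\right)\left(\frac{Du}{Dt}-g\right)+\left(\frac{R}{20}-\frac16\right)\gamma\mu^{-1}\frac{D}{Dt}\Delta u-\frac{\gamma}{6}\mu^{-1}\left(\nabla u+\frac{\gamma}{6}\mu^{-1}\nabla\Delta u\right)\Delta u$. The integrated Maxey–Riley system is $y(t)=y_0+\int_{t_0}^t\big(w(s)+A_u(y(s),s)\big)\,ds$, $w(t)=w_0+\int_{t_0}^t\Big(-\mu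 w(s)-M_u(y(s),s)w(s)-\kappa\mu^{1/2}\frac{w(s)}{\sqrt{t-s}}+B_u(y(s),s)\Big)\,ds$. A solution on $[t_0,T)$ with initial condition $(y_0,w_0)$ is a pair of continuous maps $y:[t_0,T)\to\mathscr{D}$, $w:[t_0,T)\to\mathbb{R}^n$ satisfying both equations for every $t\in[t_0,T)$. Assumption $( * )$: $u$ is smooth enough that the first-order partial derivatives in time and space of $A_u$ and $B_u$ exist, are continuous, and are uniformly bounded in time and space, i.e. there is a constant $L_b$ with $\|\partial_tA_u\|_\infty,\|\nabla A_u\|_\infty,\|\partial_tB_u\|_\infty,\|\nabla B_u\|_\infty<L_b$. *)

theory Defs
  imports "HOL-Analysis.Analysis"
begin

definition pdx :: "'n::finite \<Rightarrow> (real^'n \<Rightarrow> 'b::real_normed_vector) \<Rightarrow> real^'n \<Rightarrow> 'b" where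
  "pdx i f x = vector_derivative (\<lambda>h. f (x + h *\<^sub>R axis i 1)) (at 0)"

definition pdt :: "(real^'n::finite \<Rightarrow> real \<Rightarrow> 'b::real_normed_vector) \<Rightarrow> real^'n \<Rightarrow> real \<Rightarrow> 'b" where
  "pdt f x t = vector_derivative (\<lambda>s. f x s) (at t within {0..})"

definition jac :: "(real^'n::finite \<Rightarrow> real^'n) \<Rightarrow> real^'n \<Rightarrow> real^'n^'n" where
  "jac f x = (\<chi> j k. pdx k f x $ j)"

definition lap :: "(real^'n::finite \<Rightarrow> real \<Rightarrow> real^'n) \<Rightarrow> real^'n \<Rightarrow> real \<Rightarrow> real^'n" where
  "lap u x t = (\<Sum>i\<in>UNIV. pdx i (\<lambda>z. pdx i (\<lambda>y. u y t) z) x)"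

definition matdt :: "(real^'n::finite \<Rightarrow> real \<Rightarrow> real^'n) \<Rightarrow> (real^'n \<Rightarrow> real \<Rightarrow> real^'n) \<Rightarrow> real^'n \<Rightarrow> real \<Rightarrow> real^'n" where
  "matdt u f x t = pdt f x t + jac (\<lambda>z. f z t) x *v u x t"

definition A_u :: "(real^'n::finite \<Rightarrow> real \<Rightarrow> real^'n) \<Rightarrow> real \<Rightarrow> real \<Rightarrow> real^'n \<Rightarrow> real \<Rightarrow> real^'n" where
  "A_u u \<gamma> \<mu> x t = u x t + (\<gamma> / 6 / \<mu>) *\<^sub>R lap u x t"

definition M_u :: "(real^'n::finite \<Rightarrow> real \<Rightarrow> real^'n) \<Rightarrow> real \<Rightarrow> real \<Rightarrow> real^'n \<Rightarrow> real \<Rightarrow> real^'n^'n" where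
  "M_u u \<gamma> \<mu> x t = jac (\<lambda>z. u z t) x + (\<gamma> / 6 / \<mu>) *\<^sub>R jac (\<lambda>z. lap u z t) x"

definition B_u :: "(real^'n::finite \<Rightarrow> real \<Rightarrow> real^'n) \<Rightarrow> real \<Rightarrow> real \<Rightarrow> real \<Rightarrow> real^'n \<Rightarrow> real^'n \<Rightarrow> real \<Rightarrow> real^'n" where
  "B_u u R \<gamma> \<mu> g x t =
     (3 * R / 2 - 1) *\<^sub>R (matdt u u x t - g)
   + ((R / 20 - 1 / 6) * \<gamma> / \<mu>) *\<^sub>R matdt u (lap u) x t
   - (\<gamma> / 6 / \<mu>) *\<^sub>R (M_u u \<gamma> \<mu> x t *v lap u x t)"

definition C1_bounded :: "(real^'n::finite \<Rightarrow> real \<Rightarrow> real^'n) \<Rightarrow> (real^'n) set \<Rightarrow> real \<Rightarrow> real \<Rightarrow> bool" where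
  "C1_bounded F D t0 Lb \<longleftrightarrow>
     (\<forall>x\<in>D. \<forall>t\<in>{t0..}.
        ((\<lambda>s. F x s) has_vector_derivative pdt F x t) (at t within {0..})
      \<and> (\<forall>i. ((\<lambda>h. F (x + h *\<^sub>R axis i 1) t) has_vector_derivative pdx i (\<lambda>z. F z t) x) (at 0))
      \<and> norm (pdt F x t) < Lb
      \<and> onorm (\<lambda>v. jac (\<lambda>z. F z t) x *v v) < Lb)
   \<and> continuous_on (D \<times> {t0..}) (\<lambda>(x, t). pdt F x t)
   \<and> (\<forall>i. continuous_on (D \<times> {t0..}) (\<lambda>(x, t). pdx i (\<lambda>z. F z t) x))"

definition assumption_star where
  "assumption_star u D t0 R \<mu> \<gamma> g Lb \<longleftrightarrow>
     C1_bounded (A_u u \<gamma> \<mu>) D t0 Lb \<and> C1_bounded (B_u u R \<gamma> \<mu> g) D t0 Lb"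

definition MR_solution ::
  "(real^'n::finite \<Rightarrow> real \<Rightarrow> real^'n) \<Rightarrow> (real^'n) set \<Rightarrow> real \<Rightarrow> real \<Rightarrow> real \<Rightarrow> real \<Rightarrow> real \<Rightarrow> real
   \<Rightarrow> real^'n \<Rightarrow> real^'n \<Rightarrow> real^'n \<Rightarrow> (real \<Rightarrow> real^'n) \<Rightarrow> (real \<Rightarrow> real^'n) \<Rightarrow> bool" where
  "MR_solution u D t0 T R \<mu> \<kappa> \<gamma> g y0 w0 y w \<longleftrightarrow>
     continuous_on {t0..<T} y \<and> continuous_on {t0..<T} w \<and> y ` {t0..<T} \<subseteq> D
   \<and> (\<forall>t\<in>{t0..<T}.
        ((\<lambda>s. w s + A_u u \<gamma> \<mu> (y s) s) has_integral (y t - y0)) {t0..t}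
      \<and> ((\<lambda>s. - \<mu> *\<^sub>R w s - M_u u \<gamma> \<mu> (y s) s *v w s
              - (\<kappa> * sqrt \<mu> / sqrt (t - s)) *\<^sub>R w s
              + B_u u R \<gamma> \<mu> g (y s) s) has_integral (w t - w0)) {t0..t})"

end

theory Submission
  imports Defs
begin


lemma jac_axis: "jac f x *v axis i 1 = pdx i f x"
  by (simp add: vec_eq_iff jac_def matrix_vector_mult_def axis_def if_distrib cong: if_cong)

lemma C1_pdx_bound:
  assumes "C1_bounded F D t0 Lb" "x \<in> D" "t \<ge> t0"
  shows "norm (pdx i (\<lambda>z. F z t) x) < Lb"
proof -
  have "norm (pdx i (\<lambda>z. F z t) x) = norm (jac (\<lambda>z. F z t) x *v axis i 1)" by (simp add: jac_axis)
  also have "\<dots> \<le> onorm (\<lambda>v. jac (\<lambda>z. F z t) x *v v) * norm (axis i (1::real))"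
    by (rule onorm) simp
  also have "\<dots> < Lb" using assms unfolding C1_bounded_def by auto
  finally show ?thesis .
qed

lemma C1_Lb_pos:
  assumes "C1_bounded F D t0 Lb" "x \<in> D" "t \<ge> t0"
  shows "Lb > 0"
proof -
  have "norm (pdt F x t) < Lb" using assms unfolding C1_bounded_def by auto
  then show ?thesis by (meson le_less_trans norm_ge_zero)
qed

lemma seg_mvt:
  fixes g :: "real \<Rightarrow> 'a::real_normed_vector"
  assumes "\<And>h. \<bar>h\<bar> \<le> \<bar>d\<bar> \<Longrightarrow> (g has_vector_derivative g' h) (at h)"
    and "\<And>h. \<bar>h\<bar> \<le> \<bar>d\<bar> \<Longrightarrow> norm (g' h) \<le> B"
  shows "norm (g d - g 0) \<le> B * \<bar>d\<bar>"
proof -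
  have "norm (g d - g 0) \<le> B * norm (d - 0)"
  proof (rule differentiable_bound[where S="{-\<bar>d\<bar>..\<bar>d\<bar>}" and f'="\<lambda>h x. x *\<^sub>R g' h"])
    fix x assume "x \<in> {-\<bar>d\<bar>..\<bar>d\<bar>}"
    then have "\<bar>x\<bar> \<le> \<bar>d\<bar>" by auto
    then show "(g has_derivative (\<lambda>y. y *\<^sub>R g' x)) (at x within {-\<bar>d\<bar>..\<bar>d\<bar>})"
      using assms(1) has_vector_derivative_def has_derivative_at_withinI by blast
    have "onorm (\<lambda>y. y *\<^sub>R g' x) = onorm (\<lambda>y::real. y) * norm (g' x)"
      by (rule onorm_scaleR_left[OF bounded_linear_ident])
    then show "onorm (\<lambda>y. y *\<^sub>R g' x) \<le> B" using assms(2)[OF \<open>\<bar>x\<bar> \<le> \<bar>d\<bar>\<close>]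
      by (simp add: onorm_id)
  qed auto
  then show ?thesis by simp
qed



lemma coord_seg:
  assumes C: "C1_bounded F D t0 Lb" and t: "t \<ge> t0"
    and inD: "\<And>h. \<bar>h\<bar> \<le> \<bar>d\<bar> \<Longrightarrow> z + h *\<^sub>R axis i 1 \<in> D"
  shows "norm (F (z + d *\<^sub>R axis i 1) t - F z t) \<le> Lb * \<bar>d\<bar>"
proof -
  let ?g = "\<lambda>h. F (z + h *\<^sub>R axis i 1) t"
  let ?g' = "\<lambda>h. pdx i (\<lambda>x. F x t) (z + h *\<^sub>R axis i 1)"
  have "norm (?g d - ?g 0) \<le> Lb * \<bar>d\<bar>"
  proof (rule seg_mvt)
    fix h :: real assume h: "\<bar>h\<bar> \<le> \<bar>d\<bar>"
    let ?x = "z + h *\<^sub>R axis i 1"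
    have xD: "?x \<in> D" using inD h by blast
    have d1: "((\<lambda>h'. F (?x + h' *\<^sub>R axis i 1) t) has_vector_derivative ?g' h) (at 0)"
      using C xD t unfolding C1_bounded_def by auto
    have d0: "((\<lambda>k. k - h) has_vector_derivative 1) (at h)"
      by (auto intro!: derivative_eq_intros)
    have "(((\<lambda>h'. F (?x + h' *\<^sub>R axis i 1) t) \<circ> (\<lambda>k. k - h)) has_vector_derivative (1 *\<^sub>R ?g' h)) (at h)"
      by (rule vector_diff_chain_at[OF d0]) (use d1 in simp)
    moreover have "((\<lambda>h'. F (?x + h' *\<^sub>R axis i 1) t) \<circ> (\<lambda>k. k - h)) = ?g"
      by (rule ext) (simp add: algebra_simps)
    ultimately show "(?g has_vector_derivative ?g' h) (at h)" by simp
    show "norm (?g' h) \<le> Lb" using C1_pdx_bound[OF C xD t] by (simp add: less_imp_le)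
  qed
  then show ?thesis by simp
qed

lemma sum_axis_comp:
  "(\<Sum>i\<in>S. (d i::real) *\<^sub>R axis i 1) $ j = (if j \<in> S \<and> finite S then d j else 0)"
  by (cases "finite S") (auto simp: sum_component axis_def if_distrib cong: if_cong)

lemma dist_self_add: "dist x (x + v) = norm (v::'a::real_normed_vector)"
proof -
  have "dist x (x + v) = dist (x + v) x" by (rule dist_commute)
  also have "\<dots> = norm v" by (simp add: dist_norm)
  finally show ?thesis .
qed

lemma loc_lip:
  fixes x x' :: "real^'n::finite"
  assumes C: "C1_bounded F D t0 Lb" and t: "t \<ge> t0"
    and ball: "ball x r \<subseteq> D" and xx: "norm (x' - x) < r"
  shows "norm (F x' t - F x t) \<le> Lb * (\<Sum>i\<in>UNIV. \<bar>(x' - x) $ i\<bar>)"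
proof -
  let ?d = "\<lambda>i. (x' - x) $ i"
  let ?v = "\<lambda>S. \<Sum>i\<in>S. ?d i *\<^sub>R axis i (1::real)"
  have "finite S \<Longrightarrow> norm (F (x + ?v S) t - F x t) \<le> Lb * (\<Sum>i\<in>S. \<bar>?d i\<bar>)" for S
  proof (induction S rule: finite_induct)
    case empty then show ?case by simp
  next
    case (insert i S)
    have inD: "(x + ?v S) + h *\<^sub>R axis i 1 \<in> D" if h: "\<bar>h\<bar> \<le> \<bar>?d i\<bar>" for h
    proof -
      have "norm (?v S + h *\<^sub>R axis i 1) \<le> norm (x' - x)"
      proof (rule norm_le_componentwise_cart)
        fix j
        have "(?v S + h *\<^sub>R axis i 1) $ j = (if j \<in> S then ?d j else 0) + h * (axis i 1 $ j)"
          using insert.hyps by (simp only: vector_add_component vector_scaleR_component sum_axis_comp) simp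
        then show "norm ((?v S + h *\<^sub>R axis i 1) $ j) \<le> norm ((x' - x) $ j)"
          using h insert.hyps by (auto simp: axis_def)
      qed
      then have "x + ?v S + h *\<^sub>R axis i 1 \<in> ball x r"
      proof -
        have "dist x (x + (?v S + h *\<^sub>R axis i 1)) = norm (?v S + h *\<^sub>R axis i 1)"
          by (rule dist_self_add)
        then show ?thesis using xx \<open>norm (?v S + h *\<^sub>R axis i 1) \<le> norm (x' - x)\<close>
          by (simp add: add.assoc)
      qed
      then show ?thesis using ball by blast
    qed
    have "norm (F (x + ?v (insert i S)) t - F (x + ?v S) t) \<le> Lb * \<bar>?d i\<bar>"
    proof -
      have "norm (F ((x + ?v S) + ?d i *\<^sub>R axis i 1) t - F (x + ?v S) t) \<le> Lb * \<bar>?d i\<bar>"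
        by (rule coord_seg[OF C t]) (rule inD)
      moreover have "x + ?v (insert i S) = (x + ?v S) + ?d i *\<^sub>R axis i 1"
        using insert.hyps by (simp add: algebra_simps)
      ultimately show ?thesis by (simp only: add.assoc)
    qed
    moreover have "norm (F (x + ?v (insert i S)) t - F x t) \<le>
        norm (F (x + ?v (insert i S)) t - F (x + ?v S) t) + norm (F (x + ?v S) t - F x t)"
      by (rule norm_diff_triangle_ineq[THEN order_trans[rotated]]) (simp add: norm_triangle_ineq)
    ultimately show ?case using insert.IH insert.hyps
      by (simp add: distrib_left)
  qed
  from this[of UNIV] have "norm (F (x + ?v UNIV) t - F x t) \<le> Lb * (\<Sum>i\<in>UNIV. \<bar>?d i\<bar>)" by simp
  moreover have "x + ?v UNIV = x'"
  proof -
    have "(x + ?v UNIV) $ j = x' $ j" for j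
      by (simp only: vector_add_component sum_axis_comp) simp
    then show ?thesis by (simp add: vec_eq_iff)
  qed
  ultimately show ?thesis by simp
qed



lemma loc_lip2:
  fixes x x' :: "real^'n::finite" and Lb :: real
  assumes C: "C1_bounded F D t0 Lb" and t: "t \<ge> t0"
    and ball: "ball x r \<subseteq> D" and xx: "norm (x' - x) < r"
  shows "norm (F x' t - F x t) \<le> (CARD('n) * Lb) * norm (x' - x)"
proof -
  have "x \<in> D" using ball xx by (metis centre_in_ball norm_ge_zero le_less_trans subsetD)
  then have Lb: "Lb > 0" using C1_Lb_pos[OF C _ t] by blast
  have "(\<Sum>i\<in>UNIV. \<bar>(x' - x) $ i\<bar>) \<le> (\<Sum>i\<in>(UNIV::'n set). norm (x' - x))"
    by (rule sum_mono) (rule component_le_norm_cart)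
  also have "\<dots> = CARD('n) * norm (x' - x)" by simp
  finally have "Lb * (\<Sum>i\<in>UNIV. \<bar>(x' - x) $ i\<bar>) \<le> Lb * (CARD('n) * norm (x' - x))"
    using Lb by (intro mult_left_mono) auto
  then show ?thesis using loc_lip[OF C t ball xx] by (simp add: mult.assoc mult.left_commute)
qed

lemma time_lip:
  assumes C: "C1_bounded F D t0 Lb" and x: "x \<in> D" and "t0 \<ge> 0" "t0 \<le> s" "s \<le> s'"
  shows "norm (F x s' - F x s) \<le> Lb * (s' - s)"
proof -
  have "norm (F x s' - F x s) \<le> Lb * norm (s' - s)"
  proof (rule differentiable_bound[where S="{s..s'}" and f'="\<lambda>h v. v *\<^sub>R pdt F x h"])
    fix h assume h: "h \<in> {s..s'}"
    then have "(F x has_vector_derivative pdt F x h) (at h within {0..})"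
      using C x assms unfolding C1_bounded_def by auto
    then have "(F x has_vector_derivative pdt F x h) (at h within {s..s'})"
      by (rule has_vector_derivative_within_subset) (use assms in auto)
    then show "(F x has_derivative (\<lambda>v. v *\<^sub>R pdt F x h)) (at h within {s..s'})"
      by (simp add: has_vector_derivative_def)
    have "norm (pdt F x h) < Lb" using C x assms h unfolding C1_bounded_def by auto
    moreover have "onorm (\<lambda>v. v *\<^sub>R pdt F x h) = onorm (\<lambda>y::real. y) * norm (pdt F x h)"
      by (rule onorm_scaleR_left[OF bounded_linear_ident])
    ultimately show "onorm (\<lambda>v. v *\<^sub>R pdt F x h) \<le> Lb" by (simp add: onorm_id)
  qed (use assms in auto)
  then show ?thesis using assms by simp
qed

lemma time_lip_abs:
  assumes C: "C1_bounded F D t0 Lb" and x: "x \<in> D" and "t0 \<ge> 0" "t0 \<le> s" "t0 \<le> s'"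
  shows "norm (F x s' - F x s) \<le> Lb * \<bar>s' - s\<bar>"
proof (cases "s \<le> s'")
  case True then show ?thesis using time_lip[OF C x assms(3,4) True] by simp
next
  case False then show ?thesis using time_lip[OF C x assms(3,5), of s] by (simp add: norm_minus_commute)
qed

lemma step_est:
  fixes y :: "real \<Rightarrow> real^'n::finite" and Lb :: real
  assumes C: "C1_bounded F D t0 Lb" and "t0 \<ge> 0" "t0 \<le> s" "t0 \<le> s'"
    and ball: "ball (y s) r \<subseteq> D" and yy: "norm (y s' - y s) < r"
  shows "norm (F (y s') s' - F (y s) s) \<le> (CARD('n) * Lb) * norm (y s' - y s) + Lb * \<bar>s' - s\<bar>"
proof -
  have x: "y s \<in> D" using ball yy by (metis centre_in_ball norm_ge_zero le_less_trans subsetD)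
  have "norm (F (y s') s' - F (y s) s) \<le> norm (F (y s') s' - F (y s) s') + norm (F (y s) s' - F (y s) s)"
    by (rule norm_diff_triangle_ineq[THEN order_trans[rotated]]) (simp add: norm_triangle_ineq)
  also have "\<dots> \<le> (CARD('n) * Lb) * norm (y s' - y s) + Lb * \<bar>s' - s\<bar>"
    using loc_lip2[OF C assms(4) ball yy] time_lip_abs[OF C x assms(2,3,4)] by linarith
  finally show ?thesis .
qed

lemma traj_cont:
  fixes y :: "real \<Rightarrow> real^'n::finite" and Lb :: real
  assumes C: "C1_bounded F D t0 Lb" and "t0 \<ge> 0" and D: "open D"
    and yc: "continuous_on {t0..<T} y" and yD: "y ` {t0..<T} \<subseteq> D"
  shows "continuous_on {t0..<T} (\<lambda>s. F (y s) s)"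
  unfolding continuous_on_iff
proof (intro ballI allI impI)
  fix s e :: real assume s: "s \<in> {t0..<T}" and e: "e > 0"
  have ysD: "y s \<in> D" using yD s by blast
  obtain r where r: "r > 0" "ball (y s) r \<subseteq> D" using D ysD open_contains_ball by blast
  have Lb: "Lb > 0" using C1_Lb_pos[OF C ysD, of s] s by auto
  define K where "K = CARD('n) * Lb"
  have K: "K > 0" using Lb by (simp add: K_def)
  obtain d1 where d1: "d1 > 0" "\<forall>s'\<in>{t0..<T}. dist s' s < d1 \<longrightarrow> dist (y s') (y s) < min r (e / (2 * K))"
  proof -
    have "min r (e / (2 * K)) > 0" using r e K by simp
    then show ?thesis using yc s that unfolding continuous_on_iff by blast
  qed
  show "\<exists>d>0. \<forall>s'\<in>{t0..<T}. dist s' s < d \<longrightarrow> dist (F (y s') s') (F (y s) s) < e"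
  proof (intro exI[of _ "min d1 (e / (2 * Lb))"] conjI ballI impI)
    show "min d1 (e / (2 * Lb)) > 0" using d1 e Lb by simp
    fix s' assume s': "s' \<in> {t0..<T}" and ds: "dist s' s < min d1 (e / (2 * Lb))"
    have yy: "norm (y s' - y s) < min r (e / (2 * K))" using d1 s' ds by (simp add: dist_norm)
    have "norm (F (y s') s' - F (y s) s) \<le> K * norm (y s' - y s) + Lb * \<bar>s' - s\<bar>"
    proof -
      have "norm (y s' - y s) < r" using yy by simp
      then show ?thesis using step_est[OF C assms(2), where s=s and s'=s' and r=r and y=y] s s' r by (simp add: K_def)
    qed
    also have "\<dots> < K * (e / (2 * K)) + Lb * (e / (2 * Lb))"
      using yy ds K Lb by (intro add_less_le_mono mult_strict_left_mono mult_left_mono) (auto simp: dist_real_def)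
    also have "\<dots> = e" using K Lb by simp
    finally show "dist (F (y s') s') (F (y s) s) < e" by (simp add: dist_norm)
  qed
qed



lemma traj_lip:
  fixes y :: "real \<Rightarrow> real^'n::finite" and Lb :: real
  assumes C: "C1_bounded F D t0 Lb" and t0: "t0 \<ge> 0" and D: "open D"
    and yc: "continuous_on {t0..<T} y" and yD: "y ` {t0..<T} \<subseteq> D"
    and pq: "t0 \<le> p" "p \<le> q" "q < T" and Bd: "Bd \<ge> 0"
    and Ly: "\<And>s s'. p \<le> s \<Longrightarrow> s \<le> s' \<Longrightarrow> s' \<le> q \<Longrightarrow> norm (y s' - y s) \<le> Bd * (s' - s)"
  shows "norm (F (y q) q - F (y p) p) \<le> (CARD('n) * Lb * Bd + Lb) * (q - p)"
proof -
  have sub: "{p..q} \<subseteq> {t0..<T}" using pq by auto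
  have "compact (y ` {p..q})"
    by (rule compact_continuous_image[OF continuous_on_subset[OF yc sub]]) simp
  then obtain r where r: "r > 0" "(\<Union>x\<in>y ` {p..q}. ball x r) \<subseteq> D"
    using compact_subset_open_imp_ball_epsilon_subset[OF _ D] yD sub by (metis image_mono order_trans)
  obtain N :: nat where N: "Bd * (q - p) < N * r" using ex_less_of_nat_mult[OF r(1)] by blast
  have Npos: "N > 0" using N Bd pq by (metis mult_nonneg_nonneg diff_ge_0_iff_ge mult_zero_left not_gr0 of_nat_0 not_less)
  define s where "s k = p + real k * (q - p) / N" for k
  define g where "g k = F (y (s k)) (s k)" for k
  define K where "K = CARD('n) * Lb"
  have step: "norm (g (Suc k) - g k) \<le> (K * Bd + Lb) * ((q - p) / N)" if k: "k < N" for k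
  proof -
    have sk: "p \<le> s k" "s k \<le> s (Suc k)" "s (Suc k) \<le> q"
    proof -
      show "p \<le> s k" using pq Npos by (simp add: s_def)
      show "s k \<le> s (Suc k)" using pq Npos by (simp add: s_def divide_right_mono mult_right_mono)
      have "real (Suc k) * (q - p) / N \<le> real N * (q - p) / N"
        using k pq Npos by (intro divide_right_mono mult_right_mono) auto
      then show "s (Suc k) \<le> q" using Npos by (simp add: s_def)
    qed
    have diff: "s (Suc k) - s k = (q - p) / N" using Npos by (simp add: s_def field_simps)
    have yy: "norm (y (s (Suc k)) - y (s k)) \<le> Bd * ((q - p) / N)"
      using Ly[OF sk] diff by simp
    also have "\<dots> < r" using N Npos by (simp add: field_simps)
    finally have yyr: "norm (y (s (Suc k)) - y (s k)) < r" .
    have "s k \<in> {p..q}" using sk by auto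
    then have ball: "ball (y (s k)) r \<subseteq> D" using r(2) by blast
    have "norm (g (Suc k) - g k) \<le> K * norm (y (s (Suc k)) - y (s k)) + Lb * \<bar>s (Suc k) - s k\<bar>"
      unfolding g_def K_def using pq sk by (intro step_est[OF C t0 _ _ ball yyr]) auto
    also have "\<dots> \<le> K * (Bd * ((q - p) / N)) + Lb * ((q - p) / N)"
    proof -
      have "y (s k) \<in> D" using ball r(1) by (meson centre_in_ball subsetD)
      then have "Lb > 0" using C1_Lb_pos[OF C, of "y (s k)" "s k"] pq sk by linarith
      then have "K \<ge> 0" by (simp add: K_def)
      then have "K * norm (y (s (Suc k)) - y (s k)) \<le> K * (Bd * ((q - p) / N))"
        using yy by (rule mult_left_mono[rotated])
      moreover have "\<bar>s (Suc k) - s k\<bar> = (q - p) / N" using diff pq by simp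
      ultimately show ?thesis by simp
    qed
    also have "\<dots> = (K * Bd + Lb) * ((q - p) / N)" by (simp add: algebra_simps add_divide_distrib[symmetric])
    finally show ?thesis .
  qed
  have "F (y q) q - F (y p) p = g N - g 0"
    using Npos by (simp add: g_def s_def)
  also have "\<dots> = (\<Sum>k<N. g (Suc k) - g k)" by (rule sum_lessThan_telescope[symmetric])
  finally have "norm (F (y q) q - F (y p) p) \<le> (\<Sum>k<N. norm (g (Suc k) - g k))"
    by (simp add: norm_sum)
  also have "\<dots> \<le> (\<Sum>k<N. (K * Bd + Lb) * ((q - p) / N))"
    by (rule sum_mono) (use step in auto)
  also have "\<dots> = (K * Bd + Lb) * (q - p)" using Npos by simp
  finally show ?thesis by (simp add: K_def)
qed



lemma vd_nondiff:
  assumes "\<not> (\<exists>D. (f has_vector_derivative D) (at (0::real)))"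
  shows "vector_derivative f (at 0) = (SOME D. False)"
proof -
  have "(\<lambda>D. (f has_vector_derivative D) (at 0)) = (\<lambda>D. False)" using assms by auto
  then show ?thesis unfolding vector_derivative_def by simp
qed

lemma M_entry_bound:
  fixes u :: "real^'n::finite \<Rightarrow> real \<Rightarrow> real^'n"
  assumes C: "C1_bounded (A_u u \<gamma> \<mu>) D t0 Lb" and x: "x \<in> D" and t: "t \<ge> t0"
    and c: "\<gamma> / 6 / \<mu> > 0"
  shows "\<bar>M_u u \<gamma> \<mu> x t $ j $ k\<bar> \<le> Lb + (1 + \<gamma> / 6 / \<mu>) * norm (SOME D::real^'n. False)"
proof -
  define c where "c = \<gamma> / 6 / \<mu>"
  have c0: "c > 0" using c by (simp add: c_def)
  define U where "U = (\<lambda>h. u (x + h *\<^sub>R axis k 1) t)"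
  define Lp where "Lp = (\<lambda>h. lap u (x + h *\<^sub>R axis k 1) t)"
  define P where "P = pdx k (\<lambda>z. A_u u \<gamma> \<mu> z t) x"
  have AF: "((\<lambda>h. U h + c *\<^sub>R Lp h) has_vector_derivative P) (at 0)"
    using C x t unfolding C1_bounded_def P_def by (auto simp: U_def Lp_def A_u_def c_def)
  have Pb: "norm P < Lb" using C1_pdx_bound[OF C x t] by (simp add: P_def)
  have ent: "M_u u \<gamma> \<mu> x t $ j $ k = vector_derivative U (at 0) $ j + c * vector_derivative Lp (at 0) $ j"
    by (simp add: M_u_def jac_def pdx_def U_def Lp_def c_def)
  show ?thesis
  proof (cases "\<exists>Du. (U has_vector_derivative Du) (at 0)")
    case True
    then obtain Du where Du: "(U has_vector_derivative Du) (at 0)" by blast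
    have "((\<lambda>h. (1 / c) *\<^sub>R ((U h + c *\<^sub>R Lp h) - U h)) has_vector_derivative (1 / c) *\<^sub>R (P - Du)) (at 0)"
      by (intro bounded_linear.has_vector_derivative[OF bounded_linear_scaleR_right] has_vector_derivative_diff AF Du)
    moreover have "(\<lambda>h. (1 / c) *\<^sub>R ((U h + c *\<^sub>R Lp h) - U h)) = Lp" using c0 by (auto simp: fun_eq_iff)
    ultimately have dL: "(Lp has_vector_derivative (1 / c) *\<^sub>R (P - Du)) (at 0)" by simp
    have "M_u u \<gamma> \<mu> x t $ j $ k = P $ j"
      using ent vector_derivative_at[OF Du] vector_derivative_at[OF dL] c0 by (simp add: algebra_simps)
    then have "\<bar>M_u u \<gamma> \<mu> x t $ j $ k\<bar> \<le> Lb" using component_le_norm_cart[of P j] Pb by simp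
    moreover have "(1 + \<gamma> / 6 / \<mu>) * norm (SOME D::real^'n. False) \<ge> 0"
      using c0 by (simp add: c_def)
    ultimately show ?thesis by linarith
  next
    case False
    have "\<not> (\<exists>DL. (Lp has_vector_derivative DL) (at 0))"
    proof
      assume "\<exists>DL. (Lp has_vector_derivative DL) (at 0)"
      then obtain DL where DL: "(Lp has_vector_derivative DL) (at 0)" by blast
      have "((\<lambda>h. (U h + c *\<^sub>R Lp h) - c *\<^sub>R Lp h) has_vector_derivative P - c *\<^sub>R DL) (at 0)"
        by (intro bounded_linear.has_vector_derivative[OF bounded_linear_scaleR_right] has_vector_derivative_diff AF DL)
      then have "(U has_vector_derivative P - c *\<^sub>R DL) (at 0)" by simp
      then show False using False by blast
    qed
    then have "vector_derivative Lp (at 0) = (SOME D. False)" by (rule vd_nondiff)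
    then have "M_u u \<gamma> \<mu> x t $ j $ k = (SOME D::real^'n. False) $ j + c * (SOME D::real^'n. False) $ j"
      using ent vd_nondiff[OF False] by simp
    also have "\<bar>\<dots>\<bar> \<le> (1 + c) * norm (SOME D::real^'n. False)"
    proof -
      define a where "a = (SOME D::real^'n. False) $ j"
      define b where "b = norm (SOME D::real^'n. False)"
      have ab: "\<bar>a\<bar> \<le> b" unfolding a_def b_def by (rule component_le_norm_cart)
      have "a + c * a = (1 + c) * a" by (simp add: algebra_simps)
      then have "\<bar>a + c * a\<bar> = (1 + c) * \<bar>a\<bar>" using c0 by (simp add: abs_mult)
      also have "\<dots> \<le> (1 + c) * b" using ab c0 by (intro mult_left_mono) auto
      finally show ?thesis by (simp add: a_def b_def)
    qed
    finally show ?thesis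
      using C1_Lb_pos[OF C x t] by (simp add: c_def)
  qed
qed

lemma matrix_norm_bound:
  fixes M :: "real^'n::finite^'n" and E :: real
  assumes "\<And>j k. \<bar>M $ j $ k\<bar> \<le> E"
  shows "norm (M *v v) \<le> (CARD('n) * CARD('n) * E) * norm v"
proof -
  have "norm (M *v v) \<le> (\<Sum>j\<in>UNIV. \<bar>(M *v v) $ j\<bar>)" by (rule norm_le_l1_cart)
  also have "\<dots> \<le> (\<Sum>j\<in>(UNIV::'n set). CARD('n) * E * norm v)"
  proof (rule sum_mono)
    fix j
    have "\<bar>(M *v v) $ j\<bar> = \<bar>\<Sum>k\<in>UNIV. M $ j $ k * v $ k\<bar>" by (simp add: matrix_vector_mult_def)
    also have "\<dots> \<le> (\<Sum>k\<in>UNIV. \<bar>M $ j $ k\<bar> * \<bar>v $ k\<bar>)" by (rule sum_abs[THEN order_trans]) (simp add: abs_mult)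
    also have "\<dots> \<le> (\<Sum>k\<in>(UNIV::'n set). E * norm v)"
    proof (rule sum_mono, rule mult_mono)
      fix k
      show "0 \<le> E" using assms[of j k] by linarith
    qed (use assms component_le_norm_cart in auto)
    finally show "\<bar>(M *v v) $ j\<bar> \<le> CARD('n) * E * norm v" by simp
  qed
  also have "\<dots> = (CARD('n) * CARD('n) * E) * norm v" by simp
  finally show ?thesis .
qed



lemma kernel_int:
  fixes c1 c :: real
  assumes "p \<le> q" "q \<le> t"
  shows "((\<lambda>s. c1 + c / sqrt (t - s)) has_integral (c1 * (q - p) + 2 * c * (sqrt (t - p) - sqrt (t - q)))) {p..q}"
proof -
  define F where "F s = c1 * s - 2 * c * sqrt (t - s)" for s
  have "((\<lambda>s. c1 + c / sqrt (t - s)) has_integral (F q - F p)) {p..q}"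
  proof (rule fundamental_theorem_of_calculus_interior[OF assms(1)])
    show "continuous_on {p..q} F" unfolding F_def by (intro continuous_intros)
    fix s assume s: "s \<in> {p<..<q}"
    then have ts: "t - s > 0" using assms by auto
    have "(F has_real_derivative (c1 - 2 * c * (inverse (sqrt (t - s)) / 2 * (-1)))) (at s)"
    proof -
      have d1: "((\<lambda>s. t - s) has_real_derivative (-1)) (at s)"
        by (auto intro!: derivative_eq_intros)
      have "((\<lambda>s. sqrt (t - s)) has_real_derivative (inverse (sqrt (t - s)) / 2 * (-1))) (at s)"
        by (rule DERIV_chain2[OF DERIV_real_sqrt[OF ts] d1])
      then have d2: "((\<lambda>s. 2 * c * sqrt (t - s)) has_real_derivative 2 * c * (inverse (sqrt (t - s)) / 2 * (-1))) (at s)"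
        by (rule DERIV_cmult)
      have d3: "((\<lambda>s. c1 * s) has_real_derivative c1) (at s)"
        by (auto intro!: derivative_eq_intros)
      show ?thesis unfolding F_def by (rule DERIV_diff[OF d3 d2])
    qed
    moreover have "c1 - 2 * c * (inverse (sqrt (t - s)) / 2 * (-1)) = c1 + c / sqrt (t - s)"
      by (simp add: field_simps)
    ultimately show "(F has_vector_derivative c1 + c / sqrt (t - s)) (at s)"
      by (simp add: has_real_derivative_iff_has_vector_derivative)
  qed
  then show ?thesis by (simp add: F_def algebra_simps)
qed

lemma abstract_gronwall:
  fixes \<phi> :: "real \<Rightarrow> real" and E2 :: "real \<Rightarrow> real"
  assumes cont: "continuous_on {t0..<T} \<phi>" and nonneg: "\<And>t. t \<in> {t0..<T} \<Longrightarrow> \<phi> t \<ge> 0"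
    and T: "T > t0" and \<delta>: "\<delta> > 0" and C0: "C0 \<ge> 0" and E1: "E1 \<ge> 0"
    and E2: "\<And>d. 0 \<le> d \<Longrightarrow> d \<le> \<delta> \<Longrightarrow> E2 d \<le> 1/2"
    and key: "\<And>a t P Q. t0 \<le> a \<Longrightarrow> a \<le> t \<Longrightarrow> t < T \<Longrightarrow> (\<forall>s\<in>{t0..a}. \<phi> s \<le> P) \<Longrightarrow>
        (\<forall>s\<in>{t0..t}. \<phi> s \<le> Q) \<Longrightarrow> 0 \<le> P \<Longrightarrow> 0 \<le> Q \<Longrightarrow> \<phi> t \<le> C0 + E1 * P + E2 (t - a) * Q"
  shows "\<exists>S. \<forall>t\<in>{t0..<T}. \<phi> t \<le> S"
proof -
  have ind: "\<exists>S. \<forall>t\<in>{t0..<T}. t \<le> t0 + real k * \<delta> \<longrightarrow> \<phi> t \<le> S" for k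
  proof (induction k)
    case 0
    show ?case by (intro exI[of _ "\<phi> t0"]) auto
  next
    case (Suc k)
    then obtain S0 where S0: "\<forall>t\<in>{t0..<T}. t \<le> t0 + real k * \<delta> \<longrightarrow> \<phi> t \<le> S0" by blast
    define S where "S = max S0 0"
    have S: "S \<ge> 0" "\<forall>t\<in>{t0..<T}. t \<le> t0 + real k * \<delta> \<longrightarrow> \<phi> t \<le> S"
      using S0 by (auto simp: S_def intro: le_max_iff_disj[THEN iffD2])
    show ?case
    proof (intro exI[of _ "S + 2 * C0 + 2 * E1 * S"] ballI impI)
      fix t assume t: "t \<in> {t0..<T}" and tk: "t \<le> t0 + real (Suc k) * \<delta>"
      have extra: "0 \<le> 2 * C0 + 2 * E1 * S" using C0 E1 S by simp
      show "\<phi> t \<le> S + 2 * C0 + 2 * E1 * S"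
      proof (cases "t \<le> t0 + real k * \<delta>")
        case True then show ?thesis using S t extra by auto
      next
        case False
        define a where "a = t0 + real k * \<delta>"
        have a: "t0 \<le> a" "a < t" "t - a \<le> \<delta>" using False tk \<delta> by (auto simp: a_def algebra_simps)
        have sub: "{t0..t} \<subseteq> {t0..<T}" using t by auto
        obtain s where s: "s \<in> {t0..t}" "\<forall>r\<in>{t0..t}. \<phi> r \<le> \<phi> s"
          using continuous_attains_sup[OF compact_Icc _ continuous_on_subset[OF cont sub]] t by auto
        have sI: "s \<in> {t0..<T}" using s sub by auto
        show ?thesis
        proof (cases "s \<le> a")
          case True
          then have "\<phi> s \<le> S" using S sI by (auto simp: a_def)
          moreover have "\<phi> t \<le> \<phi> s" using s(2) t by auto
          ultimately show ?thesis using extra by linarith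
        next
          case False
          have P: "\<forall>r\<in>{t0..a}. \<phi> r \<le> S" using S a t by (auto simp: a_def)
          have Q: "\<forall>r\<in>{t0..s}. \<phi> r \<le> \<phi> s" using s by auto
          have "\<phi> s \<le> C0 + E1 * S + E2 (s - a) * \<phi> s"
            using key[OF a(1) _ _ P Q S(1) nonneg[OF sI]] False sI by auto
          moreover have "E2 (s - a) * \<phi> s \<le> 1/2 * \<phi> s"
            using E2[of "s - a"] False a s nonneg[OF sI] by (intro mult_right_mono) auto
          ultimately have "\<phi> s \<le> 2 * C0 + 2 * E1 * S" by linarith
          moreover have "\<phi> t \<le> \<phi> s" using s(2) t by auto
          ultimately show ?thesis using S by linarith
        qed
      qed
    qed
  qed
  obtain k :: nat where k: "T - t0 < real k * \<delta>" using ex_less_of_nat_mult[OF \<delta>] by blast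
  obtain S where "\<forall>t\<in>{t0..<T}. t \<le> t0 + real k * \<delta> \<longrightarrow> \<phi> t \<le> S" using ind by blast
  then show ?thesis using k by (intro exI[of _ S]) auto
qed



lemma norm4: "norm (a - b - c + d) \<le> norm a + norm b + norm c + norm (d::'a::real_normed_vector)"
  using norm_triangle_ineq[of "a - b - c" d] norm_triangle_ineq4[of "a - b" c] norm_triangle_ineq4[of a b]
  by linarith

theorem lemma3p7:
  fixes D :: "(real^'n::finite) set"
    and u :: "real^'n \<Rightarrow> real \<Rightarrow> real^'n"
    and g y0 w0 :: "real^'n"
    and t0 T R \<mu> \<kappa> \<gamma> Lb :: real
    and y w :: "real \<Rightarrow> real^'n"
  assumes "open D" and "connected D"
    and "t0 \<ge> 0" and "R > 0" and "\<mu> > 0" and "\<kappa> > 0" and "\<gamma> > 0"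
    and "assumption_star u D t0 R \<mu> \<gamma> g Lb"
    and "T > t0"
    and "MR_solution u D t0 T R \<mu> \<kappa> \<gamma> g y0 w0 y w"
  shows "\<exists>CY CW. (\<forall>t\<in>{t0..<T}. norm (y t) \<le> CY) \<and> (\<forall>t\<in>{t0..<T}. norm (w t) \<le> CW)"
proof -
  define A where "A = A_u u \<gamma> \<mu>"
  define Bf where "Bf = B_u u R \<gamma> \<mu> g"
  define M where "M = M_u u \<gamma> \<mu>"
  have CA: "C1_bounded A D t0 Lb" and CB: "C1_bounded Bf D t0 Lb"
    using assms(8) by (simp_all add: assumption_star_def A_def Bf_def)
  note sol = assms(10)[unfolded MR_solution_def]
  have yc: "continuous_on {t0..<T} y" and wc: "continuous_on {t0..<T} w" and yD: "y ` {t0..<T} \<subseteq> D"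
    using sol by auto
  have Yint: "((\<lambda>s. w s + A (y s) s) has_integral (y t - y0)) {t0..t}" if "t \<in> {t0..<T}" for t
    using sol that by (simp add: A_def)
  define c where "c = \<kappa> * sqrt \<mu>"
  have c: "c > 0" using assms by (simp add: c_def)
  have Wint: "((\<lambda>s. - \<mu> *\<^sub>R w s - M (y s) s *v w s - (c / sqrt (t - s)) *\<^sub>R w s + Bf (y s) s)
      has_integral (w t - w0)) {t0..t}" if "t \<in> {t0..<T}" for t
    using sol that by (simp add: Bf_def M_def c_def)
  define f where "f = (\<lambda>s. A (y s) s)"
  define hh where "hh = (\<lambda>s. Bf (y s) s)"
  have fc: "continuous_on {t0..<T} f" unfolding f_def by (rule traj_cont[OF CA assms(3,1) yc yD])
  have hc: "continuous_on {t0..<T} hh" unfolding hh_def by (rule traj_cont[OF CB assms(3,1) yc yD])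
  have t0I: "t0 \<in> {t0..<T}" using assms(9) by simp
  have "y t0 \<in> D" using yD t0I by blast
  then have Lb: "Lb > 0" using C1_Lb_pos[OF CA, of "y t0" t0] by simp
  define K where "K = CARD('n) * Lb"
  have K: "K > 0" using Lb by (simp add: K_def)
  define E where "E = Lb + (1 + \<gamma> / 6 / \<mu>) * norm (SOME D::real^'n. False)"
  define Mb where "Mb = CARD('n) * CARD('n) * E"
  have Mb: "Mb \<ge> 0" using Lb assms(5,7) by (simp add: Mb_def E_def)
  have Mbound: "norm (M (y s) s *v v) \<le> Mb * norm v" if s: "s \<in> {t0..<T}" for s v
    unfolding Mb_def
  proof (rule matrix_norm_bound)
    fix j k
    show "\<bar>M (y s) s $ j $ k\<bar> \<le> E"
      unfolding M_def E_def
      by (rule M_entry_bound[OF CA[unfolded A_def]]) (use s yD assms(5,7) in auto)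
  qed
  define \<phi> where "\<phi> = (\<lambda>s. norm (w s) + norm (f s) + norm (hh s))"
  have \<phi>c: "continuous_on {t0..<T} \<phi>" unfolding \<phi>_def
    by (intro continuous_intros wc fc hc)
  have \<phi>0: "\<phi> s \<ge> 0" for s by (simp add: \<phi>_def)
  have ydiff: "((\<lambda>r. w r + f r) has_integral (y s' - y s)) {s..s'}"
    if "t0 \<le> s" "s \<le> s'" "s' < T" for s s'
  proof -
    have i1: "(\<lambda>r. w r + f r) integrable_on {t0..s'}" using Yint[of s'] that by (auto simp: f_def)
    have "integral {t0..s} (\<lambda>r. w r + f r) + integral {s..s'} (\<lambda>r. w r + f r) = integral {t0..s'} (\<lambda>r. w r + f r)"
      by (rule Henstock_Kurzweil_Integration.integral_combine[OF that(1,2) i1])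
    then have "integral {s..s'} (\<lambda>r. w r + f r) = integral {t0..s'} (\<lambda>r. w r + f r) - integral {t0..s} (\<lambda>r. w r + f r)"
      by (simp add: eq_diff_eq add.commute)
    moreover have "integral {t0..s} (\<lambda>r. w r + f r) = y s - y0"
      using Yint[of s] that by (auto simp: f_def integral_unique)
    moreover have "integral {t0..s'} (\<lambda>r. w r + f r) = y s' - y0"
      using Yint[of s'] that by (auto simp: f_def integral_unique)
    ultimately have "integral {s..s'} (\<lambda>r. w r + f r) = y s' - y s"
      by simp
    moreover have "(\<lambda>r. w r + f r) integrable_on {s..s'}"
      by (rule integrable_subinterval_real[OF i1]) (use that in auto)
    ultimately show ?thesis by (metis integrable_integral)
  qed
  have ylip: "norm (y s' - y s) \<le> Bd * (s' - s)"
    if "t0 \<le> p" "q < T" "\<forall>r\<in>{p..q}. \<phi> r \<le> Bd" "p \<le> s" "s \<le> s'" "s' \<le> q" for p q Bd s s'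
  proof -
    have "s \<in> {p..q}" using that by auto
    then have "\<phi> s \<le> Bd" using that(3) by blast
    then have Bd: "0 \<le> Bd" using \<phi>0[of s] by linarith
    have "norm (y s' - y s) \<le> Bd * Henstock_Kurzweil_Integration.content {s..s'}"
    proof (rule has_integral_bound_real[OF Bd, of "{}"])
      show "((\<lambda>r. w r + f r) has_integral (y s' - y s)) {s..s'}" by (rule ydiff) (use that in auto)
      fix r assume r: "r \<in> {s..s'} - {}"
      have "norm (w r + f r) \<le> norm (w r) + norm (f r)" by (rule norm_triangle_ineq)
      also have "\<dots> \<le> \<phi> r" by (simp add: \<phi>_def)
      also have "\<dots> \<le> Bd" using that r by auto
      finally show "norm (w r + f r) \<le> Bd" .
    qed auto
    then show ?thesis using that by simp
  qed
  have fstep: "norm (f q - f p) \<le> (K * Bd + Lb) * (q - p)" "norm (hh q - hh p) \<le> (K * Bd + Lb) * (q - p)"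
    if pq: "t0 \<le> p" "p \<le> q" "q < T" and B: "\<forall>r\<in>{p..q}. \<phi> r \<le> Bd" for p q Bd
  proof -
    have "p \<in> {p..q}" using pq by auto
    then have "\<phi> p \<le> Bd" using B by blast
    then have Bd: "0 \<le> Bd" using \<phi>0[of p] by linarith
    have L: "\<And>s s'. p \<le> s \<Longrightarrow> s \<le> s' \<Longrightarrow> s' \<le> q \<Longrightarrow> norm (y s' - y s) \<le> Bd * (s' - s)"
      using ylip[OF pq(1,3) B] by blast
    show "norm (f q - f p) \<le> (K * Bd + Lb) * (q - p)"
      using traj_lip[OF CA assms(3,1) yc yD pq Bd L] by (simp add: f_def K_def)
    show "norm (hh q - hh p) \<le> (K * Bd + Lb) * (q - p)"
      using traj_lip[OF CB assms(3,1) yc yD pq Bd L] by (simp add: hh_def K_def)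
  qed
  define c1 where "c1 = \<mu> + Mb + 1"
  have c1: "c1 > 0" using Mb assms(5) by (simp add: c1_def)
  have wpt: "norm (- \<mu> *\<^sub>R w s - M (y s) s *v w s - (c / sqrt (t - s)) *\<^sub>R w s + Bf (y s) s)
      \<le> (c1 + c / sqrt (t - s)) * \<phi> s" if s: "s \<in> {t0..t}" "t < T" for s t
  proof -
    define k where "k = c / sqrt (t - s)"
    have k: "k \<ge> 0" using c s by (simp add: k_def)
    have sI: "s \<in> {t0..<T}" using s by auto
    have "norm (- \<mu> *\<^sub>R w s - M (y s) s *v w s - k *\<^sub>R w s + Bf (y s) s)
        \<le> norm (- \<mu> *\<^sub>R w s) + norm (M (y s) s *v w s) + norm (k *\<^sub>R w s) + norm (Bf (y s) s)"
      by (rule norm4)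
    also have "\<dots> \<le> \<mu> * norm (w s) + Mb * norm (w s) + k * norm (w s) + norm (hh s)"
      using Mbound[OF sI, of "w s"] k assms(5) by (simp add: hh_def)
    also have "\<dots> = (\<mu> + Mb + k) * norm (w s) + norm (hh s)" by (simp add: algebra_simps)
    also have "\<dots> \<le> (\<mu> + Mb + k) * \<phi> s + \<phi> s"
      using Mb k assms(5) by (intro add_mono mult_left_mono) (auto simp: \<phi>_def)
    also have "\<dots> = (c1 + k) * \<phi> s" by (simp add: c1_def algebra_simps)
    finally show ?thesis by (simp add: k_def)
  qed
  have wstep: "norm (w t) \<le> norm w0 + P * (c1 * (a - t0) + 2 * c * (sqrt (t - t0) - sqrt (t - a)))
      + Q * (c1 * (t - a) + 2 * c * (sqrt (t - a) - sqrt (t - t)))"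
    if at: "t0 \<le> a" "a \<le> t" "t < T" and P: "\<forall>r\<in>{t0..a}. \<phi> r \<le> P" and Q: "\<forall>r\<in>{t0..t}. \<phi> r \<le> Q"
      and P0: "0 \<le> P" and Q0: "0 \<le> Q" for a t P Q
  proof -
    define G where "G = (\<lambda>s. - \<mu> *\<^sub>R w s - M (y s) s *v w s - (c / sqrt (t - s)) *\<^sub>R w s + Bf (y s) s)"
    have tI: "t \<in> {t0..<T}" using at by auto
    have GI: "(G has_integral (w t - w0)) {t0..t}" using Wint[OF tI] by (simp add: G_def)
    then have Gi: "G integrable_on {t0..t}" by blast
    have comb: "integral {t0..a} G + integral {a..t} G = w t - w0"
      using Henstock_Kurzweil_Integration.integral_combine[OF at(1,2) Gi] GI by (simp add: integral_unique)
    have k1: "((\<lambda>s. P * (c1 + c / sqrt (t - s))) has_integral P * (c1 * (a - t0) + 2 * c * (sqrt (t - t0) - sqrt (t - a)))) {t0..a}"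
      by (rule has_integral_mult_right, rule kernel_int) (use at in auto)
    have k2: "((\<lambda>s. Q * (c1 + c / sqrt (t - s))) has_integral Q * (c1 * (t - a) + 2 * c * (sqrt (t - a) - sqrt (t - t)))) {a..t}"
      by (rule has_integral_mult_right, rule kernel_int) (use at in auto)
    have b1: "norm (integral {t0..a} G) \<le> P * (c1 * (a - t0) + 2 * c * (sqrt (t - t0) - sqrt (t - a)))"
    proof -
      have "norm (integral {t0..a} G) \<le> integral {t0..a} (\<lambda>s. P * (c1 + c / sqrt (t - s)))"
      proof (rule integral_norm_bound_integral)
        show "G integrable_on {t0..a}" by (rule integrable_subinterval_real[OF Gi]) (use at in auto)
        show "(\<lambda>s. P * (c1 + c / sqrt (t - s))) integrable_on {t0..a}" using k1 by blast
        fix s assume s: "s \<in> {t0..a}"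
        then have "norm (G s) \<le> (c1 + c / sqrt (t - s)) * \<phi> s" unfolding G_def by (intro wpt) (use at in auto)
        also have "\<dots> \<le> (c1 + c / sqrt (t - s)) * P"
          using P s c c1 at by (intro mult_left_mono) auto
        finally show "norm (G s) \<le> P * (c1 + c / sqrt (t - s))" by (simp add: mult.commute)
      qed
      then show ?thesis by (simp only: integral_unique[OF k1])
    qed
    have b2: "norm (integral {a..t} G) \<le> Q * (c1 * (t - a) + 2 * c * (sqrt (t - a) - sqrt (t - t)))"
    proof -
      have "norm (integral {a..t} G) \<le> integral {a..t} (\<lambda>s. Q * (c1 + c / sqrt (t - s)))"
      proof (rule integral_norm_bound_integral)
        show "G integrable_on {a..t}" by (rule integrable_subinterval_real[OF Gi]) (use at in auto)
        show "(\<lambda>s. Q * (c1 + c / sqrt (t - s))) integrable_on {a..t}" using k2 by blast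
        fix s assume s: "s \<in> {a..t}"
        then have "norm (G s) \<le> (c1 + c / sqrt (t - s)) * \<phi> s" unfolding G_def by (intro wpt) (use at in auto)
        also have "\<dots> \<le> (c1 + c / sqrt (t - s)) * Q"
          using Q s c c1 at by (intro mult_left_mono) auto
        finally show "norm (G s) \<le> Q * (c1 + c / sqrt (t - s))" by (simp add: mult.commute)
      qed
      then show ?thesis by (simp only: integral_unique[OF k2])
    qed
    have "w t = w0 + (integral {t0..a} G + integral {a..t} G)" using comb by (simp add: algebra_simps)
    then have "norm (w t) = norm (w0 + (integral {t0..a} G + integral {a..t} G))" by simp
    then have "norm (w t) \<le> norm w0 + norm (integral {t0..a} G) + norm (integral {a..t} G)"
      using norm_triangle_ineq[of w0 "integral {t0..a} G + integral {a..t} G"]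
        norm_triangle_ineq[of "integral {t0..a} G" "integral {a..t} G"] by linarith
    then show ?thesis using b1 b2 by linarith
  qed
  define C0 where "C0 = norm w0 + norm (f t0) + norm (hh t0) + 2 * Lb * (T - t0)"
  define E1 where "E1 = 2 * K * (T - t0) + c1 * (T - t0) + 2 * c * sqrt (T - t0)"
  define E2 where "E2 = (\<lambda>d. 2 * K * d + c1 * d + 2 * c * sqrt d)"
  define \<delta> where "\<delta> = min (1 / (4 * (2 * K + c1))) ((1 / (8 * c))^2)"
  have \<delta>: "\<delta> > 0" using K c1 c by (simp add: \<delta>_def)
  have C0: "C0 \<ge> 0" using Lb assms(9) by (simp add: C0_def)
  have E1: "E1 \<ge> 0" using K c1 c assms(9) by (simp add: E1_def)
  have E2b: "E2 d \<le> 1/2" if d: "0 \<le> d" "d \<le> \<delta>" for d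
  proof -
    have KC: "2 * K + c1 > 0" using K c1 by simp
    have "(2 * K + c1) * d \<le> (2 * K + c1) * (1 / (4 * (2 * K + c1)))"
      using d KC by (intro mult_left_mono) (auto simp: \<delta>_def)
    also have "\<dots> = 1/4" using KC by simp
    finally have h1: "(2 * K + c1) * d \<le> 1/4" .
    have "d \<le> (1 / (8 * c))^2" using d by (simp add: \<delta>_def)
    then have "sqrt d \<le> sqrt ((1 / (8 * c))^2)" by (rule real_sqrt_le_mono)
    also have "\<dots> = 1 / (8 * c)" using c by simp
    finally have "2 * c * sqrt d \<le> 2 * c * (1 / (8 * c))" using c by (intro mult_left_mono) auto
    also have "\<dots> = 1/4" using c by simp
    finally have h2: "2 * c * sqrt d \<le> 1/4" .
    have "E2 d = (2 * K + c1) * d + 2 * c * sqrt d" by (simp add: E2_def algebra_simps)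
    then show ?thesis using h1 h2 by linarith
  qed
  have key: "\<phi> t \<le> C0 + E1 * P + E2 (t - a) * Q"
    if at: "t0 \<le> a" "a \<le> t" "t < T" and P: "\<forall>s\<in>{t0..a}. \<phi> s \<le> P" and Q: "\<forall>s\<in>{t0..t}. \<phi> s \<le> Q"
      and P0: "0 \<le> P" and Q0: "0 \<le> Q" for a t P Q
  proof -
    have Q': "\<forall>s\<in>{a..t}. \<phi> s \<le> Q" using Q at by auto
    have tri: "norm (F t) \<le> norm (F t0) + norm (F a - F t0) + norm (F t - F a)" for F :: "real \<Rightarrow> real^'n"
    proof -
      have "F t = F t0 + (F a - F t0) + (F t - F a)" by simp
      then have "norm (F t) = norm (F t0 + (F a - F t0) + (F t - F a))" by simp
      then show ?thesis using norm_triangle_ineq[of "F t0 + (F a - F t0)" "F t - F a"]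
        norm_triangle_ineq[of "F t0" "F a - F t0"] by linarith
    qed
    have ex: "(K * P + Lb) * (a - t0) + (K * Q + Lb) * (t - a) = K * P * (a - t0) + K * Q * (t - a) + Lb * (t - t0)"
      by (simp add: algebra_simps)
    have nf: "norm (f t) \<le> norm (f t0) + K * P * (a - t0) + K * Q * (t - a) + Lb * (t - t0)"
    proof -
      have "norm (f a - f t0) \<le> (K * P + Lb) * (a - t0)" using fstep(1)[of t0 a P] at P by simp
      moreover have "norm (f t - f a) \<le> (K * Q + Lb) * (t - a)" using fstep(1)[of a t Q] at Q' by simp
      ultimately show ?thesis using tri[of f] ex by linarith
    qed
    have nh: "norm (hh t) \<le> norm (hh t0) + K * P * (a - t0) + K * Q * (t - a) + Lb * (t - t0)"
    proof -
      have "norm (hh a - hh t0) \<le> (K * P + Lb) * (a - t0)" using fstep(2)[of t0 a P] at P by simp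
      moreover have "norm (hh t - hh a) \<le> (K * Q + Lb) * (t - a)" using fstep(2)[of a t Q] at Q' by simp
      ultimately show ?thesis using tri[of hh] ex by linarith
    qed
    have nw: "norm (w t) \<le> norm w0 + P * (c1 * (a - t0) + 2 * c * (sqrt (t - t0) - sqrt (t - a)))
      + Q * (c1 * (t - a) + 2 * c * (sqrt (t - a) - sqrt (t - t)))"
      by (rule wstep[OF at P Q P0 Q0])
    have i1: "K * P * (a - t0) \<le> K * P * (T - t0)"
      using K P0 at by (intro mult_left_mono) auto
    have i2: "Lb * (t - t0) \<le> Lb * (T - t0)" using Lb at by (intro mult_left_mono) auto
    have i3: "P * (c1 * (a - t0) + 2 * c * (sqrt (t - t0) - sqrt (t - a))) \<le> P * (c1 * (T - t0) + 2 * c * sqrt (T - t0))"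
    proof (rule mult_left_mono[OF _ P0])
      have "c1 * (a - t0) \<le> c1 * (T - t0)" using c1 at by (intro mult_left_mono) auto
      moreover have "sqrt (t - t0) - sqrt (t - a) \<le> sqrt (T - t0)"
      proof -
        have "sqrt (t - t0) \<le> sqrt (T - t0)" using at by (intro real_sqrt_le_mono) auto
        moreover have "sqrt (t - a) \<ge> 0" using at by simp
        ultimately show ?thesis by linarith
      qed
      then have "2 * c * (sqrt (t - t0) - sqrt (t - a)) \<le> 2 * c * sqrt (T - t0)" using c by (intro mult_left_mono) auto
      ultimately show "c1 * (a - t0) + 2 * c * (sqrt (t - t0) - sqrt (t - a)) \<le> c1 * (T - t0) + 2 * c * sqrt (T - t0)"
        by linarith
    qed
    have eq: "C0 + E1 * P + E2 (t - a) * Q = norm w0 + norm (f t0) + norm (hh t0) + 2 * (Lb * (T - t0))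
        + 2 * (K * P * (T - t0)) + P * (c1 * (T - t0) + 2 * c * sqrt (T - t0))
        + 2 * (K * Q * (t - a)) + Q * (c1 * (t - a) + 2 * c * (sqrt (t - a) - sqrt (t - t)))"
      by (simp add: C0_def E1_def E2_def algebra_simps)
    have "\<phi> t = norm (w t) + norm (f t) + norm (hh t)" by (simp add: \<phi>_def)
    then show ?thesis using nf nh nw i1 i2 i3 eq by linarith
  qed
  obtain S where S: "\<forall>t\<in>{t0..<T}. \<phi> t \<le> S"
    using abstract_gronwall[OF \<phi>c \<phi>0 assms(9) \<delta> C0 E1 E2b key] by blast
  have "\<phi> t0 \<le> S" using S t0I by blast
  then have S0: "S \<ge> 0" using \<phi>0[of t0] by linarith
  show ?thesis
  proof (intro exI conjI ballI)
    fix t assume t: "t \<in> {t0..<T}"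
    have "\<phi> t \<le> S" using S t by blast
    then show "norm (w t) \<le> S" unfolding \<phi>_def
      using norm_ge_zero[of "f t"] norm_ge_zero[of "hh t"] by linarith
    have "norm (y t - y0) \<le> S * Henstock_Kurzweil_Integration.content {t0..t}"
    proof (rule has_integral_bound_real[OF S0, of "{}"])
      show "((\<lambda>s. w s + A (y s) s) has_integral (y t - y0)) {t0..t}" by (rule Yint[OF t])
      fix r assume r: "r \<in> {t0..t} - {}"
      have "norm (w r + A (y r) r) \<le> norm (w r) + norm (f r)" by (simp add: f_def norm_triangle_ineq)
      also have "\<dots> \<le> \<phi> r" by (simp add: \<phi>_def)
      also have "\<dots> \<le> S" using S r t by auto
      finally show "norm (w r + A (y r) r) \<le> S" .
    qed auto
    also have "\<dots> \<le> S * (T - t0)" using t S0 by (intro mult_left_mono) auto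
    finally have "norm (y t - y0) \<le> S * (T - t0)" .
    then show "norm (y t) \<le> norm y0 + S * (T - t0)" using norm_triangle_sub[of "y t" y0] by linarith
  qed
qed


end
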